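(* Let $G$ be an amenable (discrete) group and let $(X,u)$, $(Y,v)$ be $G$-spaces with $X$ $G$-complemented in its bidual. Then two exact sequences of $G$-spaces $$0\to X\xrightarrow{i}Z_1\xrightarrow{q}Y\to0,\qquad 0\to X\xrightarrow{j}Z_2\xrightarrow{p}Y\to0$$ are equivalent in the category of $G$-spaces if and only if they are equivalent as exact sequences of Banach spaces. In particular such an exact sequence of $G$-spaces $G$-splits if and only if it splits.
   Context: A $G$-space is a Banach space with a bounded action of $G$ ($u(gh)=u(g)u(h)$, $\sup\|u(g)\|<\infty$). An exact sequence of $G$-spaces is an exact sequence of Banach spaces in which each space is a $G$-space and the arrows are bounded linear $G$-equivariant maps ($Tu(g)=v(g)T$); here the actions on $X$ and $Y$ are $u$ and $v$. Two such sequences are equivalent as Banach sequences if there is a bounded linear $T:Z_1\to Z_2$ with $Ti=j$ and $pT=q$; equivalent in the category of $G$-spaces if such a $T$ can be chosen $G$-equivariant. A sequence splits if it is Banach-equivalent to $0\to X\to X\oplus Y\to Y\to0$, and $G$-splits if it is $G$-equivalent to this sequence with the diagonal action $(x,y)\mapsto(u(g)x,v(g)y)$ (equivalently, the quotient map admits a bounded linear $G$-equivariant right inverse). $X$ is $G$-complemented in its bidual if there is a bounded projection $P:X^{**}\to X$ with $Pu(g)^{**}=u(g)P$ for all $g$. *)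

theory Defs
  imports "HOL-Analysis.Analysis" "HOL-Algebra.Group"
begin

definition amenable :: "('g, 'b) monoid_scheme \<Rightarrow> bool" where
  "amenable G \<longleftrightarrow> (\<exists>m :: ('g \<Rightarrow> real) \<Rightarrow> real.
     (\<forall>f h. bounded (f ` carrier G) \<longrightarrow> bounded (h ` carrier G) \<longrightarrow>
         m (\<lambda>x. f x + h x) = m f + m h) \<and>
     (\<forall>c f. bounded (f ` carrier G) \<longrightarrow> m (\<lambda>x. c * f x) = c * m f) \<and>
     (\<forall>f. bounded (f ` carrier G) \<longrightarrow> (\<forall>x\<in>carrier G. 0 \<le> f x) \<longrightarrow> 0 \<le> m f) \<and>
     m (\<lambda>x. 1) = 1 \<and>
     (\<forall>g\<in>carrier G. \<forall>f. bounded (f ` carrier G) \<longrightarrow>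
         m (\<lambda>x. f (g \<otimes>\<^bsub>G\<^esub> x)) = m f))"

definition G_space :: "('g, 'b) monoid_scheme \<Rightarrow> ('g \<Rightarrow> ('x::real_normed_vector \<Rightarrow>\<^sub>L 'x)) \<Rightarrow> bool" where
  "G_space G u \<longleftrightarrow>
     (\<forall>g\<in>carrier G. \<forall>h\<in>carrier G. u (g \<otimes>\<^bsub>G\<^esub> h) = u g o\<^sub>L u h) \<and>
     (\<exists>C. \<forall>g\<in>carrier G. norm (u g) \<le> C)"

definition equivariant :: "('g, 'b) monoid_scheme \<Rightarrow> ('g \<Rightarrow> ('x::real_normed_vector \<Rightarrow>\<^sub>L 'x))
    \<Rightarrow> ('g \<Rightarrow> ('y::real_normed_vector \<Rightarrow>\<^sub>L 'y)) \<Rightarrow> ('x \<Rightarrow>\<^sub>L 'y) \<Rightarrow> bool" where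
  "equivariant G u v T \<longleftrightarrow> (\<forall>g\<in>carrier G. T o\<^sub>L u g = v g o\<^sub>L T)"

definition exact_seq :: "('x::real_normed_vector \<Rightarrow>\<^sub>L 'z::real_normed_vector) \<Rightarrow> ('z \<Rightarrow>\<^sub>L 'y::real_normed_vector) \<Rightarrow> bool" where
  "exact_seq i q \<longleftrightarrow> inj (blinfun_apply i) \<and> surj (blinfun_apply q) \<and>
     range (blinfun_apply i) = {z. q z = 0}"

definition G_exact_seq :: "('g, 'b) monoid_scheme \<Rightarrow> ('g \<Rightarrow> ('x::real_normed_vector \<Rightarrow>\<^sub>L 'x))
    \<Rightarrow> ('g \<Rightarrow> ('z::real_normed_vector \<Rightarrow>\<^sub>L 'z)) \<Rightarrow> ('g \<Rightarrow> ('y::real_normed_vector \<Rightarrow>\<^sub>L 'y))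
    \<Rightarrow> ('x \<Rightarrow>\<^sub>L 'z) \<Rightarrow> ('z \<Rightarrow>\<^sub>L 'y) \<Rightarrow> bool" where
  "G_exact_seq G u w v i q \<longleftrightarrow> G_space G u \<and> G_space G w \<and> G_space G v \<and>
     exact_seq i q \<and> equivariant G u w i \<and> equivariant G w v q"

definition seq_equiv :: "('x::real_normed_vector \<Rightarrow>\<^sub>L 'z1::real_normed_vector) \<Rightarrow> ('z1 \<Rightarrow>\<^sub>L 'y::real_normed_vector)
    \<Rightarrow> ('x \<Rightarrow>\<^sub>L 'z2::real_normed_vector) \<Rightarrow> ('z2 \<Rightarrow>\<^sub>L 'y) \<Rightarrow> bool" where
  "seq_equiv i q j p \<longleftrightarrow> (\<exists>T :: 'z1 \<Rightarrow>\<^sub>L 'z2. T o\<^sub>L i = j \<and> p o\<^sub>L T = q)"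

definition G_seq_equiv :: "('g, 'b) monoid_scheme
    \<Rightarrow> ('g \<Rightarrow> ('z1::real_normed_vector \<Rightarrow>\<^sub>L 'z1)) \<Rightarrow> ('g \<Rightarrow> ('z2::real_normed_vector \<Rightarrow>\<^sub>L 'z2))
    \<Rightarrow> ('x::real_normed_vector \<Rightarrow>\<^sub>L 'z1) \<Rightarrow> ('z1 \<Rightarrow>\<^sub>L 'y::real_normed_vector)
    \<Rightarrow> ('x \<Rightarrow>\<^sub>L 'z2) \<Rightarrow> ('z2 \<Rightarrow>\<^sub>L 'y) \<Rightarrow> bool" where
  "G_seq_equiv G w1 w2 i q j p \<longleftrightarrow>
     (\<exists>T :: 'z1 \<Rightarrow>\<^sub>L 'z2. T o\<^sub>L i = j \<and> p o\<^sub>L T = q \<and> equivariant G w1 w2 T)"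

definition inl_blinfun :: "'x::real_normed_vector \<Rightarrow>\<^sub>L ('x \<times> 'y::real_normed_vector)" where
  "inl_blinfun = Blinfun (\<lambda>x. (x, 0))"

definition diag_action :: "('g \<Rightarrow> ('x::real_normed_vector \<Rightarrow>\<^sub>L 'x)) \<Rightarrow> ('g \<Rightarrow> ('y::real_normed_vector \<Rightarrow>\<^sub>L 'y))
    \<Rightarrow> 'g \<Rightarrow> (('x \<times> 'y) \<Rightarrow>\<^sub>L ('x \<times> 'y))" where
  "diag_action u v g = Blinfun (\<lambda>z. (u g (fst z), v g (snd z)))"

definition splits :: "('x::real_normed_vector \<Rightarrow>\<^sub>L 'z::real_normed_vector) \<Rightarrow> ('z \<Rightarrow>\<^sub>L 'y::real_normed_vector) \<Rightarrow> bool" where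
  "splits i q \<longleftrightarrow> seq_equiv i q (inl_blinfun :: 'x \<Rightarrow>\<^sub>L ('x \<times> 'y)) snd_blinfun"

definition G_splits :: "('g, 'b) monoid_scheme \<Rightarrow> ('g \<Rightarrow> ('x::real_normed_vector \<Rightarrow>\<^sub>L 'x))
    \<Rightarrow> ('g \<Rightarrow> ('z::real_normed_vector \<Rightarrow>\<^sub>L 'z)) \<Rightarrow> ('g \<Rightarrow> ('y::real_normed_vector \<Rightarrow>\<^sub>L 'y))
    \<Rightarrow> ('x \<Rightarrow>\<^sub>L 'z) \<Rightarrow> ('z \<Rightarrow>\<^sub>L 'y) \<Rightarrow> bool" where
  "G_splits G u w v i q \<longleftrightarrow>
     G_seq_equiv G w (diag_action u v) i q (inl_blinfun :: 'x \<Rightarrow>\<^sub>L ('x \<times> 'y)) snd_blinfun"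

definition dual_map :: "('a::real_normed_vector \<Rightarrow>\<^sub>L 'c::real_normed_vector)
    \<Rightarrow> (('c \<Rightarrow>\<^sub>L real) \<Rightarrow>\<^sub>L ('a \<Rightarrow>\<^sub>L real))" where
  "dual_map A = Blinfun (\<lambda>f. f o\<^sub>L A)"

definition canon_emb :: "'a::real_normed_vector \<Rightarrow>\<^sub>L (('a \<Rightarrow>\<^sub>L real) \<Rightarrow>\<^sub>L real)" where
  "canon_emb = Blinfun (\<lambda>x. Blinfun (\<lambda>f::'a \<Rightarrow>\<^sub>L real. blinfun_apply f x))"

definition G_complemented_in_bidual :: "('g, 'b) monoid_scheme \<Rightarrow> ('g \<Rightarrow> ('x::real_normed_vector \<Rightarrow>\<^sub>L 'x)) \<Rightarrow> bool" where
  "G_complemented_in_bidual G u \<longleftrightarrow>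
     (\<exists>P :: ((('x \<Rightarrow>\<^sub>L real) \<Rightarrow>\<^sub>L real) \<Rightarrow>\<^sub>L 'x).
        (\<forall>x. blinfun_apply P (blinfun_apply canon_emb x) = x) \<and>
        (\<forall>g\<in>carrier G. P o\<^sub>L dual_map (dual_map (u g)) = u g o\<^sub>L P))"

end

theory Submission
  imports Defs
begin

lemma baire_step:
  fixes A :: "'a::banach \<Rightarrow>\<^sub>L 'b::banach"
  assumes cl: "closed (range A)"
  shows "\<exists>N y \<epsilon>. \<epsilon> > 0 \<and> y \<in> range A \<and> (\<forall>w\<in>range A. dist w y < \<epsilon> \<longrightarrow> w \<in> closure (A ` cball 0 N))"
proof -
  define W where "W = range (blinfun_apply A)"
  define T where "T n = W \<inter> closure (blinfun_apply A ` cball 0 (real n))" for n :: nat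
  have cm: "completely_metrizable_space (top_of_set W)"
  proof (rule completely_metrizable_space_closedin[OF completely_metrizable_space_euclidean])
    show "closedin euclidean W" using cl unfolding W_def by (simp only: closed_closedin)
  qed
  have un: "\<Union>(range T) = W"
  proof
    show "\<Union>(range T) \<subseteq> W" unfolding T_def by blast
    show "W \<subseteq> \<Union>(range T)"
    proof
      fix w assume "w \<in> W"
      then obtain x where x: "w = A x" unfolding W_def by blast
      obtain n :: nat where n: "norm x \<le> real n" using real_arch_simple[of "norm x"] by (elim exE)
      have "x \<in> cball 0 (real n)" using n by simp
      then have "w \<in> blinfun_apply A ` cball 0 (real n)" unfolding x by (rule imageI)
      then have "w \<in> closure (blinfun_apply A ` cball 0 (real n))" by (rule subsetD[OF closure_subset])
      then have "w \<in> T n" unfolding T_def using \<open>w \<in> W\<close> by (intro IntI)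
      then show "w \<in> \<Union>(range T)" by (rule UnionI[OF rangeI])
    qed
  qed
  have tW: "topspace (top_of_set W) = W" by simp
  have "\<exists>n. top_of_set W interior_of T n \<noteq> {}"
  proof (rule ccontr)
    assume "\<not> (\<exists>n. top_of_set W interior_of T n \<noteq> {})"
    then have H: "\<And>n. top_of_set W interior_of T n = {}" by blast
    have "top_of_set W interior_of \<Union>(range T) = {}"
    proof (rule Baire_category_alt)
      show "completely_metrizable_space (top_of_set W) \<or> locally_compact_space (top_of_set W) \<and> regular_space (top_of_set W)"
        using cm by blast
      show "countable (range T)" by simp
      fix S assume "S \<in> range T"
      then obtain n where S: "S = T n" by blast
      have "closedin (top_of_set W) (T n)" unfolding T_def by (rule closedin_closed_Int) simp
      then show "closedin (top_of_set W) S \<and> top_of_set W interior_of S = {}" using H S by blast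
    qed
    then have "top_of_set W interior_of W = {}" using un by simp
    moreover have "top_of_set W interior_of W = W" using interior_of_topspace[of "top_of_set W"] tW by simp
    moreover have "0 \<in> W" unfolding W_def by (metis blinfun.zero_right rangeI)
    ultimately show False by blast
  qed
  then obtain n y where y: "y \<in> top_of_set W interior_of T n" by blast
  have "openin (top_of_set W) (top_of_set W interior_of T n)" by (rule openin_interior_of)
  then obtain \<epsilon> where e: "\<epsilon> > 0" "ball y \<epsilon> \<inter> W \<subseteq> top_of_set W interior_of T n"
    using y unfolding openin_contains_ball by blast
  have sub: "top_of_set W interior_of T n \<subseteq> T n" by (rule interior_of_subset)
  have "y \<in> W" using y sub unfolding T_def by blast
  have "w \<in> closure (A ` cball 0 (real n))" if w: "w \<in> range A" "dist w y < \<epsilon>" for w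
  proof -
    have "w \<in> ball y \<epsilon> \<inter> W" using w unfolding W_def by (simp add: dist_commute)
    then have "w \<in> T n" using e sub by blast
    then show ?thesis unfolding T_def by blast
  qed
  then show ?thesis using e \<open>y \<in> W\<close> unfolding W_def by blast
qed

lemma approx_step:
  fixes A :: "'a::banach \<Rightarrow>\<^sub>L 'b::banach"
  assumes cl: "closed (range A)"
  shows "\<exists>C>0. \<forall>w\<in>range A. \<forall>\<delta>>0. \<exists>x. norm x \<le> C * norm w \<and> norm (A x - w) < \<delta>"
proof -
  obtain N y \<epsilon> where e: "\<epsilon> > 0" and y: "y \<in> range A"
    and H: "\<forall>w\<in>range A. dist w y < \<epsilon> \<longrightarrow> w \<in> closure (A ` cball 0 N)"
    using baire_step[OF cl] by blast
  have yc: "y \<in> closure (A ` cball 0 N)" using H y e by auto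
  define M where "M = 2 * max N 0"
  have M0: "M \<ge> 0" unfolding M_def by simp
  have H2: "\<exists>x. norm x \<le> M \<and> norm (A x - w) < \<delta>" if w: "w \<in> range A" "norm w < \<epsilon>" and d: "\<delta> > 0" for w \<delta>
  proof -
    obtain a b where "w = A a" "y = A b" using w y by auto
    then have "y + w \<in> range A" by (metis blinfun.add_right rangeI)
    moreover have "dist (y + w) y < \<epsilon>" using w by (simp add: dist_norm)
    ultimately have "y + w \<in> closure (A ` cball 0 N)" using H by blast
    then obtain x1 where x1: "x1 \<in> cball 0 N" "dist (A x1) (y + w) < \<delta>/2"
      using d unfolding closure_approachable by (metis half_gt_zero image_iff)
    obtain x2 where x2: "x2 \<in> cball 0 N" "dist (A x2) y < \<delta>/2"
      using yc d unfolding closure_approachable by (metis half_gt_zero image_iff)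
    have "norm (x1 - x2) \<le> norm x1 + norm x2" by (rule norm_triangle_ineq4)
    also have "\<dots> \<le> M" using x1 x2 unfolding M_def by auto
    finally have n: "norm (x1 - x2) \<le> M" .
    have "A (x1 - x2) - w = (A x1 - (y + w)) - (A x2 - y)" by (simp add: blinfun.diff_right)
    then have "norm (A (x1 - x2) - w) \<le> norm (A x1 - (y + w)) + norm (A x2 - y)"
      by (metis norm_triangle_ineq4)
    also have "\<dots> < \<delta>" using x1 x2 by (simp add: dist_norm)
    finally show ?thesis using n by blast
  qed
  define C where "C = 2 * M / \<epsilon> + 1"
  have C0: "C > 0" unfolding C_def using M0 e by (simp add: add_nonneg_pos)
  have "\<exists>x. norm x \<le> C * norm w \<and> norm (A x - w) < \<delta>" if w: "w \<in> range A" and d: "\<delta> > 0" for w \<delta>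
  proof (cases "w = 0")
    case True then show ?thesis using d by (intro exI[of _ 0]) auto
  next
    case False
    define s where "s = \<epsilon> / (2 * norm w)"
    have s0: "s > 0" using False e unfolding s_def by simp
    obtain a where a: "w = A a" using w by auto
    have "s *\<^sub>R w = A (s *\<^sub>R a)" unfolding a by (simp add: blinfun.scaleR_right)
    then have "s *\<^sub>R w \<in> range A" by simp
    moreover have "norm (s *\<^sub>R w) < \<epsilon>" using s0 False e unfolding s_def by simp
    ultimately obtain x' where x': "norm x' \<le> M" "norm (A x' - s *\<^sub>R w) < s * \<delta>"
      using H2 s0 d by (meson mult_pos_pos)
    define x where "x = (1/s) *\<^sub>R x'"
    have "norm x = norm x' / s" unfolding x_def using s0 by simp
    also have "\<dots> \<le> M / s" using x' s0 by (simp add: divide_right_mono)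
    also have "\<dots> = 2 * M / \<epsilon> * norm w" unfolding s_def using False e by (simp add: field_simps)
    also have "\<dots> \<le> C * norm w" unfolding C_def by (simp add: distrib_right)
    finally have n: "norm x \<le> C * norm w" .
    have "A x - w = (1/s) *\<^sub>R (A x' - s *\<^sub>R w)" unfolding x_def using s0
      by (simp add: blinfun.scaleR_right scaleR_diff_right)
    then have "norm (A x - w) = norm (A x' - s *\<^sub>R w) / s" using s0 by simp
    also have "\<dots> < \<delta>" using x' s0 by (simp add: divide_less_eq mult.commute)
    finally show ?thesis using n by blast
  qed
  then show ?thesis using C0 by blast
qed

lemma bounded_below:
  fixes A :: "'a::banach \<Rightarrow>\<^sub>L 'b::banach"
  assumes inj: "inj A" and cl: "closed (range A)"
  shows "\<exists>K>0. \<forall>x. norm x \<le> K * norm (A x)"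
proof -
  obtain C where C0: "C > 0" and H: "\<forall>w\<in>range A. \<forall>\<delta>>0. \<exists>x. norm x \<le> C * norm w \<and> norm (A x - w) < \<delta>"
    using approx_step[OF cl] by blast
  have "\<forall>w\<in>range A. \<exists>x. norm x \<le> C * norm w \<and> norm (A x - w) \<le> norm w / 2"
  proof
    fix w assume w: "w \<in> range A"
    show "\<exists>x. norm x \<le> C * norm w \<and> norm (A x - w) \<le> norm w / 2"
    proof (cases "w = 0")
      case True then show ?thesis by (intro exI[of _ 0]) auto
    next
      case False
      then show ?thesis using H w by (metis less_eq_real_def half_gt_zero zero_less_norm_iff)
    qed
  qed
  then obtain ch where ch: "\<And>w. w \<in> range A \<Longrightarrow> norm (ch w) \<le> C * norm w \<and> norm (A (ch w) - w) \<le> norm w / 2"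
    by metis
  have "norm x0 \<le> (2 * C) * norm (A x0)" for x0
  proof -
    define w where "w = A x0"
    define F where "F v = v - A (ch v)" for v
    define ws where "ws k = (F ^^ k) w" for k
    have ws0: "ws 0 = w" and wsS: "ws (Suc k) = F (ws k)" for k unfolding ws_def by simp_all
    have wr: "ws k \<in> range A" for k
    proof (induction k)
      case 0 then show ?case unfolding ws0 w_def by simp
    next
      case (Suc k)
      then obtain a where "ws k = A a" by auto
      then have "ws (Suc k) = A (a - ch (ws k))" unfolding wsS F_def by (simp add: blinfun.diff_right)
      then show ?case by simp
    qed
    have wn: "norm (ws k) \<le> norm w * (1/2)^k" for k
    proof (induction k)
      case 0 then show ?case by (simp add: ws0)
    next
      case (Suc k)
      have "norm (ws (Suc k)) = norm (A (ch (ws k)) - ws k)" unfolding wsS F_def by (simp add: norm_minus_commute)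
      also have "\<dots> \<le> norm (ws k) / 2" using ch[OF wr] by blast
      also have "\<dots> \<le> norm w * (1/2)^k / 2" using Suc by simp
      finally show ?case by simp
    qed
    define xs where "xs k = ch (ws k)" for k
    have xn: "norm (xs k) \<le> C * norm w * (1/2)^k" for k
    proof -
      have "norm (xs k) \<le> C * norm (ws k)" unfolding xs_def using ch[OF wr] by blast
      also have "\<dots> \<le> C * (norm w * (1/2)^k)" using wn C0 by (simp add: mult_left_mono)
      finally show ?thesis by simp
    qed
    have sg: "summable (\<lambda>k. C * norm w * (1/2::real)^k)"
      by (intro summable_mult summable_geometric) simp
    have sn: "summable (\<lambda>k. norm (xs k))"
      by (rule summable_comparison_test'[OF sg]) (use xn in simp)
    have sx: "summable xs" using sn by (rule summable_norm_cancel)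
    have ps: "(\<Sum>k<n. A (xs k)) = w - ws n" for n
    proof (induction n)
      case 0 then show ?case by (simp add: ws0)
    next
      case (Suc n) then show ?case by (simp add: wsS F_def xs_def)
    qed
    have "ws \<longlonglongrightarrow> 0"
    proof (rule Lim_null_comparison)
      show "\<forall>\<^sub>F k in sequentially. norm (ws k) \<le> norm w * (1/2)^k" using wn by simp
      show "(\<lambda>k. norm w * (1/2::real)^k) \<longlonglongrightarrow> 0"
        by (intro tendsto_mult_right_zero LIMSEQ_power_zero) simp
    qed
    then have "(\<lambda>n. w - ws n) \<longlonglongrightarrow> w - 0" by (intro tendsto_diff tendsto_const)
    then have "(\<lambda>k. A (xs k)) sums w" unfolding sums_def ps by simp
    moreover have "A (suminf xs) = (\<Sum>k. A (xs k))"
      using bounded_linear.suminf[OF blinfun.bounded_linear_right sx] .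
    ultimately have "A (suminf xs) = A x0" unfolding w_def by (metis sums_unique)
    then have eq: "suminf xs = x0" using inj by (simp add: inj_eq)
    have "norm (suminf xs) \<le> (\<Sum>k. norm (xs k))" using summable_norm[OF sn] .
    also have "\<dots> \<le> (\<Sum>k. C * norm w * (1/2::real)^k)" using suminf_le[OF xn sn sg] .
    also have "\<dots> = C * norm w * 2" using suminf_mult[of "\<lambda>k. (1/2::real)^k" "C * norm w"] suminf_geometric[of "1/2::real"] by simp
    finally show ?thesis using eq unfolding w_def by (simp add: algebra_simps)
  qed
  then show ?thesis using C0 by (intro exI[of _ "2*C"]) auto
qed

definition inv_mean :: "('g, 'b) monoid_scheme \<Rightarrow> (('g \<Rightarrow> real) \<Rightarrow> real) \<Rightarrow> bool" where
  "inv_mean G m \<longleftrightarrow>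
     (\<forall>f h. bounded (f ` carrier G) \<longrightarrow> bounded (h ` carrier G) \<longrightarrow>
         m (\<lambda>x. f x + h x) = m f + m h) \<and>
     (\<forall>c f. bounded (f ` carrier G) \<longrightarrow> m (\<lambda>x. c * f x) = c * m f) \<and>
     (\<forall>f. bounded (f ` carrier G) \<longrightarrow> (\<forall>x\<in>carrier G. 0 \<le> f x) \<longrightarrow> 0 \<le> m f) \<and>
     m (\<lambda>x. 1) = 1 \<and>
     (\<forall>g\<in>carrier G. \<forall>f. bounded (f ` carrier G) \<longrightarrow>
         m (\<lambda>x. f (g \<otimes>\<^bsub>G\<^esub> x)) = m f)"

lemma amenable_inv_mean: "amenable G \<Longrightarrow> \<exists>m. inv_mean G m"
  unfolding amenable_def inv_mean_def by blast

lemma bdI: fixes f :: "'a \<Rightarrow> real" assumes "\<And>x. x \<in> S \<Longrightarrow> \<bar>f x\<bar> \<le> M" shows "bounded (f ` S)"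
proof (unfold bounded_iff, intro exI ballI)
  fix y assume "y \<in> f ` S"
  then obtain x where "x \<in> S" "y = f x" by auto
  then show "norm y \<le> M" using assms by simp
qed

lemma bdE: "bounded ((f::'a \<Rightarrow> real) ` S) \<Longrightarrow> \<exists>M. \<forall>x\<in>S. \<bar>f x\<bar> \<le> M"
  unfolding bounded_iff by auto

lemma bd_add: "bounded ((f::'a \<Rightarrow> real) ` S) \<Longrightarrow> bounded (h ` S) \<Longrightarrow> bounded ((\<lambda>x. f x + h x) ` S)"
proof -
  assume "bounded (f ` S)" "bounded (h ` S)"
  then obtain M1 M2 where "\<forall>x\<in>S. \<bar>f x\<bar> \<le> M1" "\<forall>x\<in>S. \<bar>h x\<bar> \<le> M2" using bdE by metis
  then show ?thesis by (intro bdI[where M="M1+M2"]) (meson abs_triangle_ineq add_mono order_trans)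
qed

lemma bd_mult: "bounded ((f::'a \<Rightarrow> real) ` S) \<Longrightarrow> bounded ((\<lambda>x. c * f x) ` S)"
proof -
  assume "bounded (f ` S)"
  then obtain M where M: "\<forall>x\<in>S. \<bar>f x\<bar> \<le> M" using bdE by metis
  show ?thesis
  proof (rule bdI[where M="\<bar>c\<bar> * M"])
    fix x assume "x \<in> S"
    then show "\<bar>c * f x\<bar> \<le> \<bar>c\<bar> * M" using M by (simp add: abs_mult mult_left_mono)
  qed
qed

lemma bd_const: "bounded ((\<lambda>x. c::real) ` S)"
  by (rule bdI[where M="\<bar>c\<bar>"]) simp

context
  fixes G :: "('g, 'b) monoid_scheme" and m
  assumes im: "inv_mean G m"
begin

lemma m_add: "bounded (f ` carrier G) \<Longrightarrow> bounded (h ` carrier G) \<Longrightarrow> m (\<lambda>x. f x + h x) = m f + m h"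
  using im unfolding inv_mean_def by blast
lemma m_mult: "bounded (f ` carrier G) \<Longrightarrow> m (\<lambda>x. c * f x) = c * m f"
  using im unfolding inv_mean_def by blast
lemma m_pos: "bounded (f ` carrier G) \<Longrightarrow> (\<And>x. x \<in> carrier G \<Longrightarrow> 0 \<le> f x) \<Longrightarrow> 0 \<le> m f"
  using im unfolding inv_mean_def by blast
lemma m_one: "m (\<lambda>x. 1) = 1"
  using im unfolding inv_mean_def by blast
lemma m_inv: "g \<in> carrier G \<Longrightarrow> bounded (f ` carrier G) \<Longrightarrow> m (\<lambda>x. f (g \<otimes>\<^bsub>G\<^esub> x)) = m f"
  using im unfolding inv_mean_def by blast

lemma m_const: "m (\<lambda>x. c) = c"
  using m_mult[OF bd_const[of 1], of c] m_one by simp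

lemma m_zero_ge: assumes "bounded (f ` carrier G)" "\<And>x. x \<in> carrier G \<Longrightarrow> f x \<le> 0" shows "m f \<le> 0"
proof -
  have "0 \<le> m (\<lambda>x. (-1) * f x)" using assms by (intro m_pos bd_mult) auto
  then show ?thesis using m_mult[OF assms(1), of "-1"] by simp
qed

lemma m_diff: "bounded (f ` carrier G) \<Longrightarrow> bounded (h ` carrier G) \<Longrightarrow> m (\<lambda>x. f x - h x) = m f - m h"
  using m_add[of f "\<lambda>x. (-1) * h x"] m_mult[of h "-1"] bd_mult[of h "carrier G" "-1"] by simp

lemma m_cong: assumes "bounded (f ` carrier G)" "bounded (h ` carrier G)" "\<And>x. x \<in> carrier G \<Longrightarrow> f x = h x"
  shows "m f = m h"
proof -
  have b: "bounded ((\<lambda>x. f x - h x) ` carrier G)" using bd_add[OF assms(1) bd_mult[OF assms(2), of "-1"]] by simp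
  have "0 \<le> m (\<lambda>x. f x - h x)" by (rule m_pos[OF b]) (simp add: assms(3))
  moreover have "m (\<lambda>x. f x - h x) \<le> 0" by (rule m_zero_ge[OF b]) (simp add: assms(3))
  ultimately show ?thesis using m_diff[OF assms(1,2)] by simp
qed

lemma m_bound: assumes "\<And>x. x \<in> carrier G \<Longrightarrow> \<bar>f x\<bar> \<le> M" shows "\<bar>m f\<bar> \<le> M"
proof -
  have b: "bounded (f ` carrier G)" using assms by (rule bdI)
  have b1: "bounded ((\<lambda>x. f x - M) ` carrier G)" using bd_add[OF b bd_const[of "-M"]] by simp
  have b2: "bounded ((\<lambda>x. f x + M) ` carrier G)" using bd_add[OF b bd_const[of "M"]] by simp
  have "m (\<lambda>x. f x - M) \<le> 0"
    by (rule m_zero_ge[OF b1]) (use assms abs_le_D1 in fastforce)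
  moreover have "0 \<le> m (\<lambda>x. f x + M)"
    by (rule m_pos[OF b2]) (use assms abs_le_D2 in fastforce)
  moreover have "m (\<lambda>x. f x - M) = m f - M" using m_diff[OF b bd_const[of M]] m_const[of M] by simp
  moreover have "m (\<lambda>x. f x + M) = m f + M" using m_add[OF b bd_const[of M]] m_const[of M] by simp
  ultimately show ?thesis by linarith
qed

end

lemma dual_map_apply: "blinfun_apply (dual_map A) f = f o\<^sub>L A"
proof -
  have "bounded_linear (\<lambda>f. f o\<^sub>L A)"
    by (rule bounded_bilinear.bounded_linear_left[OF bounded_bilinear_blinfun_compose])
  then show ?thesis unfolding dual_map_def using bounded_linear_Blinfun_apply by metis
qed

lemma canon_emb_apply:
  fixes x :: "'a::real_normed_vector" and f :: "'a \<Rightarrow>\<^sub>L real"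
  shows "blinfun_apply (blinfun_apply canon_emb x) f = blinfun_apply f x"
proof -
  have bl1: "bounded_linear (\<lambda>f::'a \<Rightarrow>\<^sub>L real. blinfun_apply f x)" for x :: 'a
    by (rule bounded_bilinear.bounded_linear_left[OF bounded_bilinear_blinfun_apply])
  have ba: "blinfun_apply (Blinfun (\<lambda>f::'a \<Rightarrow>\<^sub>L real. blinfun_apply f x)) g = g x" for x :: 'a and g
    using bounded_linear_Blinfun_apply[OF bl1[of x]] by simp
  have bl2: "bounded_linear (\<lambda>x::'a. Blinfun (\<lambda>f::'a \<Rightarrow>\<^sub>L real. blinfun_apply f x))"
  proof (rule bounded_linear_intro[where K=1])
    show "Blinfun (\<lambda>f::'a \<Rightarrow>\<^sub>L real. blinfun_apply f (x + y)) = Blinfun (\<lambda>f::'a \<Rightarrow>\<^sub>L real. blinfun_apply f x) + Blinfun (\<lambda>f::'a \<Rightarrow>\<^sub>L real. blinfun_apply f y)" for x y :: 'a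
      by (rule blinfun_eqI) (simp only: ba blinfun.add_left, simp add: blinfun.add_right)
    show "Blinfun (\<lambda>f::'a \<Rightarrow>\<^sub>L real. blinfun_apply f (r *\<^sub>R x)) = r *\<^sub>R Blinfun (\<lambda>f::'a \<Rightarrow>\<^sub>L real. blinfun_apply f x)" for r and x :: 'a
      by (rule blinfun_eqI) (simp only: ba blinfun.scaleR_left, simp add: blinfun.scaleR_right)
    show "norm (Blinfun (\<lambda>f::'a \<Rightarrow>\<^sub>L real. blinfun_apply f x)) \<le> norm x * 1" for x :: 'a
      by (rule norm_blinfun_bound) (simp_all add: ba, metis norm_blinfun real_norm_def mult.commute)
  qed
  show ?thesis unfolding canon_emb_def
    by (simp add: bounded_linear_Blinfun_apply[OF bl2] bounded_linear_Blinfun_apply[OF bl1])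
qed

lemma equivariant_apply: "equivariant G u w T \<Longrightarrow> g \<in> carrier G \<Longrightarrow> T (u g x) = w g (T x)"
  unfolding equivariant_def by (metis blinfun_apply_blinfun_compose)

lemma G_space_apply: "G_space G u \<Longrightarrow> g \<in> carrier G \<Longrightarrow> h \<in> carrier G \<Longrightarrow> u (g \<otimes>\<^bsub>G\<^esub> h) x = u g (u h x)"
  unfolding G_space_def by (metis blinfun_apply_blinfun_compose)

lemma G_space_bound: assumes "G_space G u" shows "\<exists>C\<ge>0. \<forall>g\<in>carrier G. norm (u g) \<le> C"
proof -
  obtain C where "\<forall>g\<in>carrier G. norm (u g) \<le> C" using assms unfolding G_space_def by blast
  then show ?thesis by (intro exI[of _ "max C 0"]) (auto intro: max.coboundedI1)
qed

lemma equivariantize: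
  fixes G :: "('g, 'b) monoid_scheme"
    and u :: "'g \<Rightarrow> ('x::banach \<Rightarrow>\<^sub>L 'x)"
    and v :: "'g \<Rightarrow> ('y::banach \<Rightarrow>\<^sub>L 'y)"
    and w1 :: "'g \<Rightarrow> ('z1::banach \<Rightarrow>\<^sub>L 'z1)"
    and w2 :: "'g \<Rightarrow> ('z2::banach \<Rightarrow>\<^sub>L 'z2)"
    and i :: "'x \<Rightarrow>\<^sub>L 'z1" and q :: "'z1 \<Rightarrow>\<^sub>L 'y"
    and j :: "'x \<Rightarrow>\<^sub>L 'z2" and p :: "'z2 \<Rightarrow>\<^sub>L 'y"
    and T :: "'z1 \<Rightarrow>\<^sub>L 'z2"
    and P :: "(('x \<Rightarrow>\<^sub>L real) \<Rightarrow>\<^sub>L real) \<Rightarrow>\<^sub>L 'x"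
  assumes grp: "group G" and im: "inv_mean G m"
    and P1: "\<And>x. P (canon_emb x) = x"
    and P2: "\<And>g. g \<in> carrier G \<Longrightarrow> P o\<^sub>L dual_map (dual_map (u g)) = u g o\<^sub>L P"
    and s1: "G_exact_seq G u w1 v i q" and s2: "G_exact_seq G u w2 v j p"
    and K0: "K > 0" and Kj: "\<And>x. norm x \<le> K * norm (j x)"
    and Ti: "T o\<^sub>L i = j" and pT: "p o\<^sub>L T = q"
  shows "\<exists>T'. T' o\<^sub>L i = j \<and> p o\<^sub>L T' = q \<and> equivariant G w1 w2 T'"
proof -
  interpret G: group G by (rule grp)
  note one = G.one_closed
  have Gu: "G_space G u" and Gw1: "G_space G w1" and Gv: "G_space G v" and Gw2: "G_space G w2"
    and ex1: "exact_seq i q" and ex2: "exact_seq j p"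
    and ei: "equivariant G u w1 i" and eq: "equivariant G w1 v q"
    and ej: "equivariant G u w2 j" and ep: "equivariant G w2 v p"
    using s1 s2 unfolding G_exact_seq_def by auto
  have uu: "\<And>g h x. g \<in> carrier G \<Longrightarrow> h \<in> carrier G \<Longrightarrow> u g (u h x) = u (g \<otimes>\<^bsub>G\<^esub> h) x"
    using G_space_apply[OF Gu] by metis
  have vv: "\<And>g h x. g \<in> carrier G \<Longrightarrow> h \<in> carrier G \<Longrightarrow> v g (v h x) = v (g \<otimes>\<^bsub>G\<^esub> h) x"
    using G_space_apply[OF Gv] by metis
  have ww1: "\<And>g h x. g \<in> carrier G \<Longrightarrow> h \<in> carrier G \<Longrightarrow> w1 g (w1 h x) = w1 (g \<otimes>\<^bsub>G\<^esub> h) x"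
    using G_space_apply[OF Gw1] by metis
  have ww2: "\<And>g h x. g \<in> carrier G \<Longrightarrow> h \<in> carrier G \<Longrightarrow> w2 g (w2 h x) = w2 (g \<otimes>\<^bsub>G\<^esub> h) x"
    using G_space_apply[OF Gw2] by metis
  have eqi: "\<And>g x. g \<in> carrier G \<Longrightarrow> w1 g (i x) = i (u g x)" using equivariant_apply[OF ei] by metis
  have eqq: "\<And>g x. g \<in> carrier G \<Longrightarrow> q (w1 g x) = v g (q x)" using equivariant_apply[OF eq] by metis
  have eqj: "\<And>g x. g \<in> carrier G \<Longrightarrow> w2 g (j x) = j (u g x)" using equivariant_apply[OF ej] by metis
  have eqp: "\<And>g x. g \<in> carrier G \<Longrightarrow> p (w2 g x) = v g (p x)" using equivariant_apply[OF ep] by metis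
  have Ti': "\<And>x. T (i x) = j x" using Ti by (metis blinfun_apply_blinfun_compose)
  have pT': "\<And>z. p (T z) = q z" using pT by (metis blinfun_apply_blinfun_compose)
  have injj: "inj j" and rj: "range j = {z. p z = 0}" using ex2 unfolding exact_seq_def by auto
  have pj: "p (j x) = 0" for x
  proof -
    have "j x \<in> range j" by (rule rangeI)
    then have "j x \<in> {z. p z = 0}" by (simp only: rj)
    then show ?thesis by simp
  qed
  define ji where "ji = inv_into UNIV (blinfun_apply j)"
  have jji: "j (ji y) = y" if "p y = 0" for y
  proof -
    have "y \<in> range j" using that by (simp add: rj)
    then show ?thesis unfolding ji_def by (rule f_inv_into_f)
  qed
  have jinj: "\<And>a b. j a = j b \<Longrightarrow> a = b" using injj by (simp add: inj_eq)
  obtain C1 where C1: "C1 \<ge> 0" "\<And>g. g \<in> carrier G \<Longrightarrow> norm (w1 g) \<le> C1" using G_space_bound[OF Gw1] by blast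
  obtain C2 where C2: "C2 \<ge> 0" "\<And>g. g \<in> carrier G \<Longrightarrow> norm (w2 g) \<le> C2" using G_space_bound[OF Gw2] by blast
  obtain Cu where Cu: "Cu \<ge> 0" "\<And>g. g \<in> carrier G \<Longrightarrow> norm (u g) \<le> Cu" using G_space_bound[OF Gu] by blast
  define e1 where "e1 = w1 \<one>\<^bsub>G\<^esub>"
  define e2 where "e2 = w2 \<one>\<^bsub>G\<^esub>"
  define D where "D g z = w2 g (T (w1 (inv\<^bsub>G\<^esub> g) z)) - e2 (T (e1 z))" for g z
  have pD: "p (D g z) = 0" if g: "g \<in> carrier G" for g z
  proof -
    have "p (w2 g (T (w1 (inv\<^bsub>G\<^esub> g) z))) = v \<one>\<^bsub>G\<^esub> (q z)"
      using g by (simp add: eqp pT' eqq vv)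
    moreover have "p (e2 (T (e1 z))) = v \<one>\<^bsub>G\<^esub> (q z)"
      unfolding e1_def e2_def by (simp add: eqp pT' eqq vv)
    ultimately show ?thesis unfolding D_def by (simp add: blinfun.diff_right)
  qed
  define \<beta> where "\<beta> g z = ji (D g z)" for g z
  have j\<beta>: "\<And>g z. g \<in> carrier G \<Longrightarrow> j (\<beta> g z) = D g z" unfolding \<beta>_def using pD jji by blast
  define L where "L = K * (2 * (C2 * (norm T * C1)))"
  have L0: "L \<ge> 0" unfolding L_def using K0 C1 C2 by simp
  have wTw: "norm (w2 g (T (w1 h z))) \<le> C2 * (norm T * C1) * norm z"
    if "g \<in> carrier G" "h \<in> carrier G" for g h z
  proof -
    have a: "norm (w1 h z) \<le> C1 * norm z"
      using norm_blinfun[of "w1 h" z] C1(2)[OF that(2)] by (meson mult_right_mono norm_ge_zero order_trans)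
    have b: "norm (T (w1 h z)) \<le> norm T * (C1 * norm z)"
      using norm_blinfun[of T "w1 h z"] a by (meson mult_left_mono norm_ge_zero order_trans)
    have c: "norm (w2 g (T (w1 h z))) \<le> C2 * (norm T * (C1 * norm z))"
      using norm_blinfun[of "w2 g" "T (w1 h z)"] b C2(2)[OF that(1)] C2(1)
      by (meson mult_mono norm_ge_zero order_trans)
    then show ?thesis by (simp add: mult.assoc)
  qed
  have \<beta>b: "norm (\<beta> g z) \<le> L * norm z" if g: "g \<in> carrier G" for g z
  proof -
    have "norm (\<beta> g z) \<le> K * norm (D g z)" using Kj j\<beta>[OF g] by metis
    also have "norm (D g z) \<le> norm (w2 g (T (w1 (inv\<^bsub>G\<^esub> g) z))) + norm (e2 (T (e1 z)))"
      unfolding D_def by (rule norm_triangle_ineq4)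
    also have "\<dots> \<le> C2 * (norm T * C1) * norm z + C2 * (norm T * C1) * norm z"
      unfolding e1_def e2_def using g by (intro add_mono wTw) auto
    finally show ?thesis using K0 unfolding L_def by (simp add: mult_left_mono algebra_simps)
  qed
  have \<beta>add: "\<beta> g (z1 + z2) = \<beta> g z1 + \<beta> g z2" if g: "g \<in> carrier G" for g z1 z2
    by (rule jinj) (simp add: j\<beta>[OF g] blinfun.add_right D_def)
  have \<beta>scale: "\<beta> g (c *\<^sub>R z) = c *\<^sub>R \<beta> g z" if g: "g \<in> carrier G" for g c z
    by (rule jinj) (simp add: j\<beta>[OF g] blinfun.scaleR_right D_def scaleR_diff_right)
  have fb: "\<And>x. x \<in> carrier G \<Longrightarrow> \<bar>f (\<beta> x z)\<bar> \<le> norm f * (L * norm z)" for f :: "'x \<Rightarrow>\<^sub>L real" and z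
  proof -
    fix x assume x: "x \<in> carrier G"
    have "\<bar>f (\<beta> x z)\<bar> \<le> norm f * norm (\<beta> x z)" using norm_blinfun[of f "\<beta> x z"] by simp
    also have "\<dots> \<le> norm f * (L * norm z)" using \<beta>b[OF x] by (simp add: mult_left_mono)
    finally show "\<bar>f (\<beta> x z)\<bar> \<le> norm f * (L * norm z)" .
  qed
  have fbd: "bounded ((\<lambda>g. f (\<beta> g z)) ` carrier G)" for f :: "'x \<Rightarrow>\<^sub>L real" and z
    by (rule bdI) (rule fb)
  define phi where "phi z f = m (\<lambda>g. blinfun_apply f (\<beta> g z))" for z f
  have phi_bl: "bounded_linear (phi z)" for z
  proof (rule bounded_linear_intro[where K="L * norm z"])
    show "phi z (f1 + f2) = phi z f1 + phi z f2" for f1 f2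
      unfolding phi_def using m_add[OF im fbd fbd] by (simp add: blinfun.add_left)
    show "phi z (r *\<^sub>R f) = r *\<^sub>R phi z f" for r f
      unfolding phi_def using m_mult[OF im fbd] by (simp add: blinfun.scaleR_left)
    show "norm (phi z f) \<le> norm f * (L * norm z)" for f
      unfolding phi_def real_norm_def by (rule m_bound[OF im]) (rule fb)
  qed
  define Phi where "Phi z = Blinfun (phi z)" for z
  have Phi_apply: "\<And>z f. blinfun_apply (Phi z) f = phi z f"
    unfolding Phi_def using bounded_linear_Blinfun_apply[OF phi_bl] by simp
  have Phi_add: "Phi (z1 + z2) = Phi z1 + Phi z2" for z1 z2
  proof (rule blinfun_eqI)
    fix f :: "'x \<Rightarrow>\<^sub>L real"
    have "phi (z1 + z2) f = m (\<lambda>g. f (\<beta> g z1) + f (\<beta> g z2))"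
      unfolding phi_def
      by (rule m_cong[OF im fbd bd_add[OF fbd fbd]]) (simp add: \<beta>add blinfun.add_right)
    then show "blinfun_apply (Phi (z1 + z2)) f = blinfun_apply (Phi z1 + Phi z2) f"
      by (simp add: Phi_apply blinfun.add_left m_add[OF im fbd fbd] phi_def)
  qed
  have Phi_scale: "Phi (c *\<^sub>R z) = c *\<^sub>R Phi z" for c z
  proof (rule blinfun_eqI)
    fix f :: "'x \<Rightarrow>\<^sub>L real"
    have "phi (c *\<^sub>R z) f = m (\<lambda>g. c * f (\<beta> g z))"
      unfolding phi_def
      by (rule m_cong[OF im fbd bd_mult[OF fbd]]) (simp add: \<beta>scale blinfun.scaleR_right)
    then show "blinfun_apply (Phi (c *\<^sub>R z)) f = blinfun_apply (c *\<^sub>R Phi z) f"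
      by (simp add: Phi_apply m_mult[OF im fbd] phi_def blinfun.scaleR_left)
  qed
  have Phi_norm: "norm (Phi z) \<le> L * norm z" for z
  proof (rule norm_blinfun_bound)
    show "0 \<le> L * norm z" using L0 by simp
    fix f :: "'x \<Rightarrow>\<^sub>L real"
    have "\<bar>m (\<lambda>g. f (\<beta> g z))\<bar> \<le> norm f * (L * norm z)" by (rule m_bound[OF im fb])
    then show "norm (Phi z f) \<le> L * norm z * norm f"
      unfolding Phi_apply phi_def real_norm_def by (simp add: mult_ac)
  qed
  have B_bl: "bounded_linear (\<lambda>z. P (Phi z))"
  proof (rule bounded_linear_intro[where K="norm P * L"])
    show "P (Phi (x + y)) = P (Phi x) + P (Phi y)" for x y by (simp add: Phi_add blinfun.add_right)
    show "P (Phi (r *\<^sub>R x)) = r *\<^sub>R P (Phi x)" for r x by (simp add: Phi_scale blinfun.scaleR_right)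
    show "norm (P (Phi x)) \<le> norm x * (norm P * L)" for x
    proof -
      have "norm (P (Phi x)) \<le> norm P * norm (Phi x)" by (rule norm_blinfun)
      also have "\<dots> \<le> norm P * (L * norm x)" using Phi_norm by (simp add: mult_left_mono)
      finally show ?thesis by (simp add: algebra_simps)
    qed
  qed
  define B where "B = Blinfun (\<lambda>z. P (Phi z))"
  have B_apply: "\<And>z. B z = P (Phi z)" unfolding B_def using bounded_linear_Blinfun_apply[OF B_bl] by simp
  define T' where "T' = (e2 o\<^sub>L T o\<^sub>L e1) + (j o\<^sub>L B) + ((id_blinfun - e2) o\<^sub>L T o\<^sub>L (id_blinfun - e1))"
  have T'_apply: "\<And>z. T' z = e2 (T (e1 z)) + j (B z) + ((T z - T (e1 z)) - e2 (T z - T (e1 z)))"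
    unfolding T'_def by (simp add: blinfun.add_left blinfun.diff_left blinfun.diff_right)
  have b0: "\<beta> g (i x) = 0" if g: "g \<in> carrier G" for g x
  proof (rule jinj)
    have "D g (i x) = 0" using g by (simp add: D_def e1_def e2_def eqi Ti' eqj uu)
    then show "j (\<beta> g (i x)) = j 0" using j\<beta>[OF g] by simp
  qed
  have B0: "B (i x) = 0" for x
  proof -
    have "Phi (i x) = 0"
    proof (rule blinfun_eqI)
      fix f :: "'x \<Rightarrow>\<^sub>L real"
      have "phi (i x) f = m (\<lambda>g. 0)"
        unfolding phi_def by (rule m_cong[OF im fbd bd_const]) (simp add: b0)
      then show "blinfun_apply (Phi (i x)) f = blinfun_apply 0 f" by (simp add: Phi_apply m_const[OF im])
    qed
    then show ?thesis by (simp add: B_apply)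
  qed
  have A: "T' o\<^sub>L i = j"
  proof (rule blinfun_eqI)
    fix x
    show "blinfun_apply (T' o\<^sub>L i) x = blinfun_apply j x"
      by (simp add: T'_apply B0 e1_def e2_def eqi Ti' eqj uu blinfun.diff_right)
  qed
  have Bq: "p o\<^sub>L T' = q"
  proof (rule blinfun_eqI)
    fix z
    show "blinfun_apply (p o\<^sub>L T') z = blinfun_apply q z"
      by (simp add: T'_apply pj eqp pT' eqq e1_def e2_def vv blinfun.diff_right blinfun.add_right)
  qed
  have Eq: "T' (w1 h z) = w2 h (T' z)" if h: "h \<in> carrier G" for h z
  proof -
    define c where "c = ji (w2 h (T (e1 z)) - e2 (T (w1 h z)))"
    have pc: "p (w2 h (T (e1 z)) - e2 (T (w1 h z))) = 0"
      using h by (simp add: blinfun.diff_right eqp pT' eqq e1_def e2_def vv)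
    have jc: "j c = w2 h (T (e1 z)) - e2 (T (w1 h z))" unfolding c_def by (rule jji[OF pc])
    have e1w: "e1 (w1 h z) = w1 h z" for z unfolding e1_def using h by (simp add: ww1)
    have w2e2: "w2 h (e2 y) = w2 h y" for y unfolding e2_def using h by (simp add: ww2)
    have \<beta>key: "\<beta> (h \<otimes>\<^bsub>G\<^esub> x) (w1 h z) = u h (\<beta> x z) + c" if x: "x \<in> carrier G" for x
    proof (rule jinj)
      have hx: "h \<otimes>\<^bsub>G\<^esub> x \<in> carrier G" using h x by simp
      have ginv: "inv\<^bsub>G\<^esub> (h \<otimes>\<^bsub>G\<^esub> x) \<otimes>\<^bsub>G\<^esub> h = inv\<^bsub>G\<^esub> x"
        using h x by (simp add: G.inv_mult_group G.m_assoc)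
      have w1i: "w1 (inv\<^bsub>G\<^esub> (h \<otimes>\<^bsub>G\<^esub> x)) (w1 h z) = w1 (inv\<^bsub>G\<^esub> x) z"
        using ww1[of "inv\<^bsub>G\<^esub> (h \<otimes>\<^bsub>G\<^esub> x)" h z] hx h ginv by simp
      have w2hx: "w2 (h \<otimes>\<^bsub>G\<^esub> x) y = w2 h (w2 x y)" for y using ww2 h x by simp
      have "j (\<beta> (h \<otimes>\<^bsub>G\<^esub> x) (w1 h z)) = D (h \<otimes>\<^bsub>G\<^esub> x) (w1 h z)" by (rule j\<beta>[OF hx])
      also have "\<dots> = w2 h (w2 x (T (w1 (inv\<^bsub>G\<^esub> x) z))) - e2 (T (w1 h z))"
        unfolding D_def w1i w2hx e1w ..
      also have "\<dots> = w2 h (D x z) + j c"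
        unfolding D_def jc by (simp add: blinfun.diff_right w2e2)
      also have "\<dots> = j (u h (\<beta> x z) + c)"
      proof -
        have "j (u h (\<beta> x z)) = w2 h (D x z)" using eqj[OF h, of "\<beta> x z"] j\<beta>[OF x, of z] by metis
        then show ?thesis by (simp add: blinfun.add_right)
      qed
      finally show "j (\<beta> (h \<otimes>\<^bsub>G\<^esub> x) (w1 h z)) = j (u h (\<beta> x z) + c)" .
    qed
    have Phikey: "Phi (w1 h z) = dual_map (dual_map (u h)) (Phi z) + canon_emb c"
    proof (rule blinfun_eqI)
      fix f :: "'x \<Rightarrow>\<^sub>L real"
      have bF: "bounded ((\<lambda>x. f (\<beta> (h \<otimes>\<^bsub>G\<^esub> x) (w1 h z))) ` carrier G)"
        by (rule bdI) (rule fb, simp add: h)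
      have "phi (w1 h z) f = m (\<lambda>x. f (\<beta> (h \<otimes>\<^bsub>G\<^esub> x) (w1 h z)))"
        unfolding phi_def by (rule m_inv[OF im h fbd, symmetric])
      also have "\<dots> = m (\<lambda>x. (f o\<^sub>L u h) (\<beta> x z) + f c)"
        by (rule m_cong[OF im bF bd_add[OF fbd bd_const]]) (simp add: \<beta>key blinfun.add_right)
      also have "\<dots> = phi z (f o\<^sub>L u h) + f c"
        unfolding phi_def by (simp only: m_add[OF im fbd[of "f o\<^sub>L u h" z] bd_const[of "f c"]] m_const[OF im])
      finally show "blinfun_apply (Phi (w1 h z)) f = blinfun_apply (dual_map (dual_map (u h)) (Phi z) + canon_emb c) f"
        by (simp add: Phi_apply blinfun.add_left dual_map_apply canon_emb_apply)
    qed
    have Bkey: "B (w1 h z) = u h (B z) + c"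
    proof -
      have "B (w1 h z) = (P o\<^sub>L dual_map (dual_map (u h))) (Phi z) + P (canon_emb c)"
        by (simp add: B_apply Phikey blinfun.add_right)
      also have "\<dots> = u h (B z) + c" by (simp add: P2[OF h] P1 B_apply)
      finally show ?thesis .
    qed
    show ?thesis
      using h by (simp add: T'_apply Bkey e1w w2e2 jc blinfun.add_right blinfun.diff_right eqj)
  qed
  have Ceq: "equivariant G w1 w2 T'"
    unfolding equivariant_def by (auto intro!: blinfun_eqI simp: Eq)
  show ?thesis using A Bq Ceq by blast
qed

lemma main_equiv:
  fixes G :: "('g, 'b) monoid_scheme"
    and u :: "'g \<Rightarrow> ('x::banach \<Rightarrow>\<^sub>L 'x)"
    and v :: "'g \<Rightarrow> ('y::banach \<Rightarrow>\<^sub>L 'y)"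
    and w1 :: "'g \<Rightarrow> ('z1::banach \<Rightarrow>\<^sub>L 'z1)"
    and w2 :: "'g \<Rightarrow> ('z2::banach \<Rightarrow>\<^sub>L 'z2)"
    and i :: "'x \<Rightarrow>\<^sub>L 'z1" and q :: "'z1 \<Rightarrow>\<^sub>L 'y"
    and j :: "'x \<Rightarrow>\<^sub>L 'z2" and p :: "'z2 \<Rightarrow>\<^sub>L 'y"
  assumes "group G" and "amenable G"
    and "G_complemented_in_bidual G u"
    and s1: "G_exact_seq G u w1 v i q"
    and s2: "G_exact_seq G u w2 v j p"
  shows "G_seq_equiv G w1 w2 i q j p \<longleftrightarrow> seq_equiv i q j p"
proof
  assume "G_seq_equiv G w1 w2 i q j p"
  then show "seq_equiv i q j p" unfolding G_seq_equiv_def seq_equiv_def by blast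
next
  assume "seq_equiv i q j p"
  then obtain T where Ti: "T o\<^sub>L i = j" and pT: "p o\<^sub>L T = q" unfolding seq_equiv_def by blast
  obtain m where im: "inv_mean G m" using amenable_inv_mean[OF assms(2)] by blast
  obtain P :: "(('x \<Rightarrow>\<^sub>L real) \<Rightarrow>\<^sub>L real) \<Rightarrow>\<^sub>L 'x" where P1: "\<And>x. P (canon_emb x) = x"
    and P2: "\<And>g. g \<in> carrier G \<Longrightarrow> P o\<^sub>L dual_map (dual_map (u g)) = u g o\<^sub>L P"
    using assms(3) unfolding G_complemented_in_bidual_def by blast
  have ex2: "exact_seq j p" using s2 unfolding G_exact_seq_def by blast
  then have injj: "inj j" and rj: "range j = {z. p z = 0}" unfolding exact_seq_def by auto
  have "closed {z. p z = 0}"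
    by (rule closed_Collect_eq) (auto intro: linear_continuous_on blinfun.bounded_linear_right continuous_on_const)
  then have "closed (range j)" using rj by simp
  then obtain K where K0: "K > 0" and Kj: "\<And>x. norm x \<le> K * norm (j x)"
    using bounded_below[OF injj] by blast
  obtain T' where "T' o\<^sub>L i = j" "p o\<^sub>L T' = q" "equivariant G w1 w2 T'"
    using equivariantize[OF assms(1) im P1 P2 s1 s2 K0 Kj Ti pT] by blast
  then show "G_seq_equiv G w1 w2 i q j p" unfolding G_seq_equiv_def by blast
qed

lemma inl_apply: "blinfun_apply (inl_blinfun :: 'x::real_normed_vector \<Rightarrow>\<^sub>L ('x \<times> 'y::real_normed_vector)) x = (x, 0)"
proof -
  have "bounded_linear (\<lambda>x::'x. (x, 0::'y))" by (intro bounded_linear_Pair) simp_all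
  then show ?thesis unfolding inl_blinfun_def by (simp add: bounded_linear_Blinfun_apply)
qed

lemma diag_apply: "blinfun_apply (diag_action u v g) z = (u g (fst z), v g (snd z))"
proof -
  have "bounded_linear (\<lambda>z. (u g (fst z), v g (snd z)))"
    by (intro bounded_linear_Pair bounded_linear_compose[OF blinfun.bounded_linear_right] bounded_linear_fst bounded_linear_snd)
  then show ?thesis unfolding diag_action_def by (simp add: bounded_linear_Blinfun_apply)
qed

lemma diag_exact:
  fixes G :: "('g, 'b) monoid_scheme"
    and u :: "'g \<Rightarrow> ('x::banach \<Rightarrow>\<^sub>L 'x)"
    and v :: "'g \<Rightarrow> ('y::banach \<Rightarrow>\<^sub>L 'y)"
  assumes Gu: "G_space G u" and Gv: "G_space G v"
  shows "G_exact_seq G u (diag_action u v) v (inl_blinfun :: 'x \<Rightarrow>\<^sub>L ('x \<times> 'y)) snd_blinfun"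
proof -
  have Gd: "G_space G (diag_action u v)"
    unfolding G_space_def
  proof (intro conjI ballI)
    fix g h assume "g \<in> carrier G" "h \<in> carrier G"
    then show "diag_action u v (g \<otimes>\<^bsub>G\<^esub> h) = diag_action u v g o\<^sub>L diag_action u v h"
      by (intro blinfun_eqI) (simp add: diag_apply G_space_apply[OF Gu] G_space_apply[OF Gv])
  next
    obtain Cu where Cu: "Cu \<ge> 0" "\<And>g. g \<in> carrier G \<Longrightarrow> norm (u g) \<le> Cu" using G_space_bound[OF Gu] by blast
    obtain Cv where Cv: "Cv \<ge> 0" "\<And>g. g \<in> carrier G \<Longrightarrow> norm (v g) \<le> Cv" using G_space_bound[OF Gv] by blast
    have "norm (diag_action u v g) \<le> Cu + Cv" if g: "g \<in> carrier G" for g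
    proof (rule norm_blinfun_bound)
      show "0 \<le> Cu + Cv" using Cu Cv by simp
      fix z :: "'x \<times> 'y"
      have a: "norm (u g (fst z)) \<le> Cu * norm z"
        using norm_blinfun[of "u g" "fst z"] Cu(2)[OF g] norm_fst_le[of "fst z" "snd z"]
        by (simp add: mult_mono' order_trans)
      have b: "norm (v g (snd z)) \<le> Cv * norm z"
        using norm_blinfun[of "v g" "snd z"] Cv(2)[OF g] norm_snd_le[of "snd z" "fst z"]
        by (simp add: mult_mono' order_trans)
      have "norm (diag_action u v g z) \<le> norm (u g (fst z)) + norm (v g (snd z))"
        unfolding diag_apply by (rule norm_Pair_le)
      also have "\<dots> \<le> (Cu + Cv) * norm z" using a b by (simp add: distrib_right)
      finally show "norm (diag_action u v g z) \<le> (Cu + Cv) * norm z" .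
    qed
    then show "\<exists>C. \<forall>g\<in>carrier G. norm (diag_action u v g) \<le> C" by blast
  qed
  have ex: "exact_seq (inl_blinfun :: 'x \<Rightarrow>\<^sub>L ('x \<times> 'y)) snd_blinfun"
    unfolding exact_seq_def
  proof (intro conjI)
    show "inj (blinfun_apply (inl_blinfun :: 'x \<Rightarrow>\<^sub>L ('x \<times> 'y)))" by (rule injI) (simp add: inl_apply)
    show "surj (blinfun_apply (snd_blinfun :: ('x \<times> 'y) \<Rightarrow>\<^sub>L 'y))" by (metis blinfun_apply_snd_blinfun surj_def snd_conv)
    show "range (blinfun_apply (inl_blinfun :: 'x \<Rightarrow>\<^sub>L ('x \<times> 'y))) = {z. blinfun_apply snd_blinfun z = 0}"
      by (auto simp: inl_apply image_iff intro: exI[where x="fst _"])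
  qed
  have e1: "equivariant G u (diag_action u v) (inl_blinfun :: 'x \<Rightarrow>\<^sub>L ('x \<times> 'y))"
    unfolding equivariant_def by (auto intro!: blinfun_eqI simp: inl_apply diag_apply)
  have e2: "equivariant G (diag_action u v) v (snd_blinfun :: ('x \<times> 'y) \<Rightarrow>\<^sub>L 'y)"
    unfolding equivariant_def by (auto intro!: blinfun_eqI simp: diag_apply)
  show ?thesis unfolding G_exact_seq_def using Gu Gv Gd ex e1 e2 by blast
qed

theorem mainTheorem16:
  fixes G :: "('g, 'b) monoid_scheme"
    and u :: "'g \<Rightarrow> ('x::banach \<Rightarrow>\<^sub>L 'x)"
    and v :: "'g \<Rightarrow> ('y::banach \<Rightarrow>\<^sub>L 'y)"
    and w1 :: "'g \<Rightarrow> ('z1::banach \<Rightarrow>\<^sub>L 'z1)"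
    and w2 :: "'g \<Rightarrow> ('z2::banach \<Rightarrow>\<^sub>L 'z2)"
    and i :: "'x \<Rightarrow>\<^sub>L 'z1" and q :: "'z1 \<Rightarrow>\<^sub>L 'y"
    and j :: "'x \<Rightarrow>\<^sub>L 'z2" and p :: "'z2 \<Rightarrow>\<^sub>L 'y"
  assumes "group G" and "amenable G"
    and "G_complemented_in_bidual G u"
    and "G_exact_seq G u w1 v i q"
    and "G_exact_seq G u w2 v j p"
  shows "(G_seq_equiv G w1 w2 i q j p \<longleftrightarrow> seq_equiv i q j p) \<and>
         (G_splits G u w1 v i q \<longleftrightarrow> splits i q)"
proof
  show "G_seq_equiv G w1 w2 i q j p \<longleftrightarrow> seq_equiv i q j p"
    by (rule main_equiv[OF assms])
  have Gu: "G_space G u" and Gv: "G_space G v" using assms(4) unfolding G_exact_seq_def by auto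
  show "G_splits G u w1 v i q \<longleftrightarrow> splits i q"
    unfolding G_splits_def splits_def
    by (rule main_equiv[OF assms(1-4) diag_exact[OF Gu Gv]])
qed

end
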